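(* Let $K\subset\mathbb{R}^3$ be finite, let $M\subset\mathbb{R}^3$ with $K^{rc}\subset M$, let $p$ be a point in $M\setminus K$, and let $B$ be a $D$-prism for $(M,K,p)$. Then $K^{rc}\subset M\setminus B$.
   Context: A horizontal segment/line is one contained in a plane $\{z=c\}$; a vertical one is parallel to the $z$ axis. A function $f:\mathbb{R}^3\to\mathbb{R}$ is $2+1$-convex if its restriction to every horizontal and every vertical line is convex; for compact $S$, $S^{rc}=\{x: f(x)\le\sup_S f\text{ for every } 2+1\text{-convex } f\}$. For $M\subset\mathbb{R}^3$, $p\in M$ is an extremal point of $M$ if no relatively open horizontal or vertical segment contained in $M$ contains $p$. Let $K$ be finite, $M\supset K^{rc}$, and $p\in M$ an extremal point of $M$ with $p\notin K$. A $D$-prism for $(M,K,p)$ is the interior $B$ of a product $T\times H$, where $T$ is a (closed) triangle in a horizontal plane (identified with a triangle in $\mathbb{R}^2$) and $H$ is a vertical segment (identified with a compact interval in $\mathbb{R}$), such that: $p\in B$; $K\cap B=\emptyset$; and $M\cap\partial B$ is contained in the union of just one of the three closed vertical rectangular faces of $\partial B$ and just one of the two closed horizontal triangular faces of $\partial B$. *)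

theory Defs
  imports "HOL-Analysis.Analysis"
begin

text \<open>Points of R^3 are modelled as ((x,y),z) :: (real \<times> real) \<times> real;
  the height coordinate z is snd, the horizontal coordinates (x,y) are fst.\<close>

type_synonym pt3 = "(real \<times> real) \<times> real"

definition rc_convex :: "(pt3 \<Rightarrow> real) \<Rightarrow> bool" where
  "rc_convex f \<longleftrightarrow>
     (\<forall>x v. snd v = 0 \<longrightarrow> convex_on UNIV (\<lambda>t. f (x + t *\<^sub>R v))) \<and>
     (\<forall>x. convex_on UNIV (\<lambda>t. f (x + t *\<^sub>R ((0,0),1))))"

definition rc_hull :: "pt3 set \<Rightarrow> pt3 set" where
  "rc_hull S = {x. \<forall>f. rc_convex f \<longrightarrow> f x \<le> Sup (f ` S)}"

definition extremal_point :: "pt3 set \<Rightarrow> pt3 \<Rightarrow> bool" where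
  "extremal_point M p \<longleftrightarrow> p \<in> M \<and>
     \<not> (\<exists>a b. a \<noteq> b \<and> (snd a = snd b \<or> fst a = fst b) \<and>
              open_segment a b \<subseteq> M \<and> p \<in> open_segment a b)"

definition D_prism :: "pt3 set \<Rightarrow> pt3 set \<Rightarrow> pt3 \<Rightarrow> pt3 set \<Rightarrow> bool" where
  "D_prism M K p B \<longleftrightarrow>
     (\<exists>(a::real\<times>real) b c (h0::real) h1.
        let T = convex hull {a, b, c}; H = {h0..h1} in
        B = interior (T \<times> H) \<and> p \<in> B \<and> K \<inter> B = {} \<and>
        (\<exists>F \<in> {closed_segment a b \<times> H, closed_segment b c \<times> H, closed_segment c a \<times> H}.
         \<exists>G \<in> {T \<times> {h0}, T \<times> {h1}}.
            M \<inter> frontier B \<subseteq> F \<union> G))"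

end

theory Submission
  imports Defs
begin

lemma local_convex_global:
  fixes g :: "real \<Rightarrow> real"
  assumes loc: "\<And>t. \<exists>e>0. convex_on (ball t e) g"
  shows "convex_on UNIV g"
proof -
  have cont: "continuous_on UNIV g"
  proof -
    have "isCont g t" for t
    proof -
      obtain e where e: "e>0" "convex_on (ball t e) g" using loc by blast
      have "continuous_on (ball t e) g" using convex_on_continuous[OF open_ball e(2)] .
      then show ?thesis by (metis centre_in_ball continuous_on_eq_continuous_at e(1) open_ball)
    qed
    then show ?thesis by (simp add: continuous_at_imp_continuous_on)
  qed
  have key: "g s \<le> g a + (s - a) / (c - a) * (g c - g a)" if ac: "a < c" and s: "a \<le> s" "s \<le> c" for a c s
  proof (rule ccontr)
    assume neg: "\<not> ?thesis"
    define k where "k = (g c - g a) / (c - a)"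
    define L where "L = (\<lambda>s. g s - g a - k * (s - a))"
    have Lc: "continuous_on UNIV L" unfolding L_def by (intro continuous_intros cont)
    obtain m where m: "m \<in> {a..c}" "\<forall>y\<in>{a..c}. L y \<le> L m"
      using continuous_attains_sup[of "{a..c}" L] Lc ac continuous_on_subset by force
    have "L s > 0" using neg unfolding L_def k_def by (simp add: field_simps)
    then have pos: "L m > 0" using m(2) s by force
    define Z where "Z = {y. a \<le> y \<and> y \<le> c \<and> L y = L m}"
    have clZ: "closed Z" unfolding Z_def
      by (intro closed_Collect_conj closed_Collect_le closed_Collect_eq continuous_intros Lc)
    have bZ: "bdd_below Z" unfolding Z_def by (rule bdd_belowI[of _ a]) auto
    have nZ: "Z \<noteq> {}" using m unfolding Z_def by auto
    define ts where "ts = Inf Z"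
    have tsZ: "ts \<in> Z" using closed_contains_Inf[OF nZ bZ clZ] ts_def by simp
    have La: "L a = 0" "L c = 0" unfolding L_def k_def using ac by auto
    have tsa: "a < ts" "ts < c" using tsZ pos La unfolding Z_def by (auto simp: le_less)
    obtain e where e: "e>0" "convex_on (ball ts e) g" using loc by blast
    define r where "r = min (e/2) (min (ts - a) (c - ts))"
    have r: "r > 0" "r < e" "r \<le> ts - a" "r \<le> c - ts" using e tsa unfolding r_def by auto
    have inb: "ts - r \<in> ball ts e" "ts + r \<in> ball ts e" using r by (auto simp: dist_real_def)
    have "g ((1/2) *\<^sub>R (ts - r) + (1/2) *\<^sub>R (ts + r)) \<le> (1/2) * g (ts - r) + (1/2) * g (ts + r)"
      using convex_onD[OF e(2), of "1/2" "ts - r" "ts + r"] inb by simp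
    moreover have "(1/2) *\<^sub>R (ts - r) + (1/2) *\<^sub>R (ts + r) = ts" by (simp add: field_simps)
    ultimately have g1: "g ts \<le> (1/2) * g (ts - r) + (1/2) * g (ts + r)" by metis
    have "L ts \<le> (1/2) * L (ts - r) + (1/2) * L (ts + r)"
      using g1 unfolding L_def by (simp add: algebra_simps)
    moreover have "L (ts + r) \<le> L m" using m(2) r tsa by auto
    moreover have "L (ts - r) < L m"
    proof -
      have "L (ts - r) \<le> L m" using m(2) r tsa by auto
      moreover have "ts - r \<notin> Z"
      proof
        assume "ts - r \<in> Z"
        then have "ts \<le> ts - r" unfolding ts_def using cInf_lower[OF _ bZ] by blast
        then show False using r by simp
      qed
      then have "L (ts - r) \<noteq> L m" using r tsa unfolding Z_def by auto
      ultimately show ?thesis by simp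
    qed
    moreover have "L ts = L m" using tsZ unfolding Z_def by simp
    ultimately show False by simp
  qed
  show ?thesis
  proof (rule convex_onI)
    fix t x y :: real assume t: "0 < t" "t < 1"
    show "g ((1 - t) *\<^sub>R x + t *\<^sub>R y) \<le> (1 - t) * g x + t * g y"
    proof (cases x y rule: linorder_cases)
      case less
      have p: "0 \<le> t*(y-x)" "0 \<le> (1-t)*(y-x)" using t less by simp_all
      have b: "x \<le> (1 - t) * x + t * y" "(1 - t) * x + t * y \<le> y"
        using p by (simp_all add: algebra_simps)
      have "g ((1 - t) * x + t * y) \<le> g x + ((1 - t) * x + t * y - x) / (y - x) * (g y - g x)"
        using key[OF less b] .
      also have "((1 - t) * x + t * y - x) / (y - x) = t" using less by (simp add: field_simps)
      finally show ?thesis by (simp add: algebra_simps)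
    next
      case equal then show ?thesis by (simp add: algebra_simps)
    next
      case greater
      have p: "0 \<le> t*(x-y)" "0 \<le> (1-t)*(x-y)" using t greater by simp_all
      have b: "y \<le> (1 - t) * x + t * y" "(1 - t) * x + t * y \<le> x"
        using p by (simp_all add: algebra_simps)
      have "g ((1 - t) * x + t * y) \<le> g y + ((1 - t) * x + t * y - y) / (x - y) * (g x - g y)"
        using key[OF greater b] .
      also have "((1 - t) * x + t * y - y) / (x - y) = 1 - t" using greater by (simp add: field_simps)
      finally show ?thesis by (simp add: algebra_simps)
    qed
  qed simp
qed

lemma rc_convex_horiz:
  assumes "rc_convex f" shows "convex_on UNIV (\<lambda>u. f (u, z))"
proof (rule convex_onI)
  fix t :: real and u1 u2 :: "real \<times> real" assume t: "0 < t" "t < 1"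
  have c: "convex_on UNIV (\<lambda>s. f ((u1, z) + s *\<^sub>R (u2 - u1, 0)))"
    using assms unfolding rc_convex_def by (metis snd_conv)
  have "f ((u1, z) + ((1 - t) * 0 + t * 1) *\<^sub>R (u2 - u1, 0)) \<le>
        (1 - t) * f ((u1, z) + 0 *\<^sub>R (u2 - u1, 0)) + t * f ((u1, z) + 1 *\<^sub>R (u2 - u1, 0))"
    using convex_onD[OF c, of t 0 1] t by simp
  moreover have "(u1, z) + ((1 - t) * 0 + t * 1) *\<^sub>R (u2 - u1, (0::real)) = ((1 - t) *\<^sub>R u1 + t *\<^sub>R u2, z)"
    by (simp add: algebra_simps)
  ultimately show "f ((1 - t) *\<^sub>R u1 + t *\<^sub>R u2, z) \<le> (1 - t) * f (u1, z) + t * f (u2, z)"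
    by simp
qed simp

lemma rc_convex_vert:
  assumes "rc_convex f" shows "convex_on UNIV (\<lambda>z. f (u, z))"
proof -
  have c: "convex_on UNIV (\<lambda>s. f ((u, 0) + s *\<^sub>R ((0,0),1)))"
    using assms unfolding rc_convex_def by blast
  moreover have "(\<lambda>s. f ((u, 0) + s *\<^sub>R ((0,0),1))) = (\<lambda>z. f (u, z))" by (simp flip: zero_prod_def)
  ultimately show ?thesis by simp
qed

lemma bound1d:
  fixes \<phi> :: "real \<Rightarrow> real"
  assumes c: "convex_on UNIV \<phi>" and M: "\<phi> (z0 - 1) \<le> M" "\<phi> (z0 + 1) \<le> M" and z: "\<bar>z - z0\<bar> \<le> 1"
  shows "\<bar>\<phi> z - \<phi> z0\<bar> \<le> \<bar>z - z0\<bar> * (M - \<phi> z0)"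
proof -
  have up: "\<phi> w \<le> \<phi> z0 + \<bar>w - z0\<bar> * (M - \<phi> z0)" if w: "\<bar>w - z0\<bar> \<le> 1" for w
  proof (cases "w \<ge> z0")
    case True
    define s where "s = w - z0"
    have s: "0 \<le> s" "s \<le> 1" using True w s_def by auto
    have "\<phi> ((1 - s) *\<^sub>R z0 + s *\<^sub>R (z0 + 1)) \<le> (1 - s) * \<phi> z0 + s * \<phi> (z0 + 1)"
      using convex_onD[OF c, of s z0 "z0 + 1"] s by simp
    moreover have "(1 - s) *\<^sub>R z0 + s *\<^sub>R (z0 + 1) = w" unfolding s_def by (simp add: algebra_simps)
    moreover have "s * \<phi> (z0 + 1) \<le> s * M" using s M by (simp add: mult_left_mono)
    ultimately show ?thesis using True s_def by (simp add: algebra_simps)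
  next
    case False
    define s where "s = z0 - w"
    have s: "0 \<le> s" "s \<le> 1" using False w s_def by auto
    have "\<phi> ((1 - s) *\<^sub>R z0 + s *\<^sub>R (z0 - 1)) \<le> (1 - s) * \<phi> z0 + s * \<phi> (z0 - 1)"
      using convex_onD[OF c, of s z0 "z0 - 1"] s by simp
    moreover have "(1 - s) *\<^sub>R z0 + s *\<^sub>R (z0 - 1) = w" unfolding s_def by (simp add: algebra_simps)
    moreover have "s * \<phi> (z0 - 1) \<le> s * M" using s M by (simp add: mult_left_mono)
    ultimately show ?thesis using False s_def by (simp add: algebra_simps)
  qed
  have mid: "\<phi> ((1/2) *\<^sub>R z + (1/2) *\<^sub>R (2*z0 - z)) \<le> (1/2) * \<phi> z + (1/2) * \<phi> (2*z0 - z)"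
    using convex_onD[OF c, of "1/2" z "2*z0 - z"] by simp
  have "(1/2) *\<^sub>R z + (1/2) *\<^sub>R (2*z0 - z) = z0" by (simp add: algebra_simps)
  with mid have mid': "\<phi> z0 \<le> (1/2) * \<phi> z + (1/2) * \<phi> (2*z0 - z)" by simp
  have u2: "\<phi> (2*z0 - z) \<le> \<phi> z0 + \<bar>z - z0\<bar> * (M - \<phi> z0)"
    using up[of "2*z0 - z"] z by (simp add: abs_minus_commute)
  show ?thesis using up[OF z] mid' u2 by (simp add: abs_le_iff)
qed

lemma rc_convex_cont:
  assumes rc: "rc_convex f" shows "continuous_on UNIV f"
proof -
  have hc: "continuous_on UNIV (\<lambda>u. f (u, z))" for z
    using convex_on_continuous[OF open_UNIV rc_convex_horiz[OF rc]] .
  have "isCont f y" for y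
  proof -
    obtain u0 z0 where y: "y = (u0, z0)" by (cases y)
    define U where "U = cball u0 (1::real)"
    have cU: "compact U" "U \<noteq> {}" unfolding U_def by auto
    obtain a1 where a1: "\<forall>u\<in>U. f (u, z0 - 1) \<le> f (a1, z0 - 1)"
      using continuous_attains_sup[OF cU, of "\<lambda>u. f (u, z0 - 1)"] continuous_on_subset[OF hc] by blast
    obtain a2 where a2: "\<forall>u\<in>U. f (u, z0 + 1) \<le> f (a2, z0 + 1)"
      using continuous_attains_sup[OF cU, of "\<lambda>u. f (u, z0 + 1)"] continuous_on_subset[OF hc] by blast
    obtain a3 where a3: "\<forall>u\<in>U. f (a3, z0) \<le> f (u, z0)"
      using continuous_attains_inf[OF cU, of "\<lambda>u. f (u, z0)"] continuous_on_subset[OF hc] by blast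
    define M where "M = max (f (a1, z0 - 1)) (f (a2, z0 + 1))"
    define m where "m = f (a3, z0)"
    define C where "C = \<bar>M - m\<bar> + 1"
    have C: "C > 0" unfolding C_def by simp
    show ?thesis unfolding continuous_at_eps_delta
    proof (intro allI impI)
      fix e :: real assume e: "e > 0"
      have "isCont (\<lambda>u. f (u, z0)) u0" using hc continuous_on_eq_continuous_at by blast
      then obtain d1 where d1: "d1 > 0" "\<forall>u. dist u u0 < d1 \<longrightarrow> dist (f (u, z0)) (f (u0, z0)) < e/2"
        unfolding continuous_at_eps_delta using e by (metis half_gt_zero)
      define d where "d = min 1 (min d1 (e / (2 * C)))"
      have d: "d > 0" using d1 e C unfolding d_def by auto
      show "\<exists>d>0. \<forall>x'. dist x' y < d \<longrightarrow> dist (f x') (f y) < e"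
      proof (intro exI conjI allI impI)
        fix w assume w: "dist w y < d"
        obtain u z where wz: "w = (u, z)" by (cases w)
        have du: "dist u u0 < d" using dist_fst_le[of w y] w wz y by simp
        have dz: "\<bar>z - z0\<bar> < d" using dist_snd_le[of w y] w wz y by (simp add: dist_real_def)
        have uU: "u \<in> U" using du d_def unfolding U_def by (simp add: dist_commute)
        have cz: "convex_on UNIV (\<lambda>z. f (u, z))" using rc_convex_vert[OF rc] .
        have b: "\<bar>f (u, z) - f (u, z0)\<bar> \<le> \<bar>z - z0\<bar> * (M - f (u, z0))"
          apply (rule bound1d[OF cz])
          using a1 a2 uU dz d_def unfolding M_def by auto
        have "M - f (u, z0) \<le> C" using a3 uU unfolding C_def m_def by force
        then have "\<bar>z - z0\<bar> * (M - f (u, z0)) \<le> \<bar>z - z0\<bar> * C" by (simp add: mult_left_mono)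
        also have "\<dots> \<le> (e / (2*C)) * C" using dz d_def C by (intro mult_right_mono) auto
        also have "\<dots> = e/2" using C by simp
        finally have p1: "\<bar>f (u, z) - f (u, z0)\<bar> \<le> e/2" using b by linarith
        have "dist u u0 < d1" using du d_def by simp
        then have "dist (f (u, z0)) (f (u0, z0)) < e/2" using d1(2) by blast
        then have p2: "\<bar>f (u, z0) - f (u0, z0)\<bar> < e/2" by (simp add: dist_real_def)
        have "\<bar>f (u, z) - f (u0, z0)\<bar> < e" using p1 p2 abs_triangle_ineq[of "f (u, z) - f (u, z0)" "f (u, z0) - f (u0, z0)"] by simp
        then show "dist (f w) (f y) < e" using wz y by (simp add: dist_real_def)
      qed (rule d)
    qed
  qed
  then show ?thesis by (simp add: continuous_at_imp_continuous_on)
qed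

lemma convex_on_Max0:
  fixes f :: "'i \<Rightarrow> real \<Rightarrow> real"
  assumes fin: "finite I" and c: "\<And>i. i \<in> I \<Longrightarrow> convex_on UNIV (f i)"
  shows "convex_on UNIV (\<lambda>x. Max (insert 0 ((\<lambda>i. f i x) ` I)))"
proof (rule convex_onI)
  fix t x y :: real assume t: "0 < t" "t < 1"
  let ?Mx = "Max (insert 0 ((\<lambda>i. f i x) ` I))" and ?My = "Max (insert 0 ((\<lambda>i. f i y) ` I))"
  have gx: "?Mx \<ge> 0" "?My \<ge> 0" using fin by auto
  have "f i ((1 - t) *\<^sub>R x + t *\<^sub>R y) \<le> (1 - t) * ?Mx + t * ?My" if i: "i \<in> I" for i
  proof -
    have "f i ((1 - t) *\<^sub>R x + t *\<^sub>R y) \<le> (1 - t) * f i x + t * f i y"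
      using convex_onD[OF c[OF i], of t x y] t by simp
    moreover have "f i x \<le> ?Mx" "f i y \<le> ?My" using fin i by auto
    ultimately show ?thesis using t by (smt (verit) mult_left_mono)
  qed
  moreover have "0 \<le> (1 - t) * ?Mx + t * ?My" using gx t by simp
  ultimately show "Max (insert 0 ((\<lambda>i. f i ((1 - t) *\<^sub>R x + t *\<^sub>R y)) ` I)) \<le> (1 - t) * ?Mx + t * ?My"
    using fin by simp
qed simp

lemma convex_on_max2:
  fixes f g :: "real \<Rightarrow> real"
  assumes "convex_on S f" "convex_on S g"
  shows "convex_on S (\<lambda>x. max (f x) (g x))"
proof (rule convex_onI)
  fix t :: real and x y assume t: "0 < t" "t < 1" and xy: "x \<in> S" "y \<in> S"
  have "f ((1 - t) *\<^sub>R x + t *\<^sub>R y) \<le> (1 - t) * f x + t * f y"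
    "g ((1 - t) *\<^sub>R x + t *\<^sub>R y) \<le> (1 - t) * g x + t * g y"
    using convex_onD[OF assms(1)] convex_onD[OF assms(2)] t xy by auto
  moreover have "(1 - t) * f x + t * f y \<le> (1 - t) * max (f x) (g x) + t * max (f y) (g y)"
    "(1 - t) * g x + t * g y \<le> (1 - t) * max (f x) (g x) + t * max (f y) (g y)"
    using t by (intro add_mono mult_left_mono; simp)+
  ultimately show "max (f ((1 - t) *\<^sub>R x + t *\<^sub>R y)) (g ((1 - t) *\<^sub>R x + t *\<^sub>R y))
      \<le> (1 - t) * max (f x) (g x) + t * max (f y) (g y)" by simp
qed (use assms convex_on_imp_convex in auto)

lemma conv_cong:
  assumes "convex_on S f" "\<And>x. x \<in> S \<Longrightarrow> f x = g x"
  shows "convex_on S g"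
proof (rule convex_onI)
  have cS: "convex S" using assms(1) convex_on_imp_convex by blast
  then show "convex S" .
  fix t :: real and x y assume t: "0 < t" "t < 1" and xy: "x \<in> S" "y \<in> S"
  have "(1 - t) *\<^sub>R x + t *\<^sub>R y \<in> S" using cS xy t by (intro convexD) auto
  then show "g ((1 - t) *\<^sub>R x + t *\<^sub>R y) \<le> (1 - t) * g x + t * g y"
    using convex_onD[OF assms(1), of t x y] t xy assms(2) by simp
qed

lemma ball_in_open_pre:
  fixes \<gamma> :: "real \<Rightarrow> 'a::topological_space"
  assumes "continuous_on UNIV \<gamma>" "open U" "\<gamma> t0 \<in> U"
  obtains e where "e > 0" "\<And>t. t \<in> ball t0 e \<Longrightarrow> \<gamma> t \<in> U"
proof -
  have "open (\<gamma> -` U)" using assms(1,2) continuous_on_open_vimage[OF open_UNIV] by auto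
  then obtain e where "e > 0" "ball t0 e \<subseteq> \<gamma> -` U" using assms(3) open_contains_ball by blast
  then show ?thesis using that by blast
qed

lemma glue:
  fixes \<gamma> :: "real \<Rightarrow> pt3" and G \<psi> :: "pt3 \<Rightarrow> real"
  assumes \<gamma>c: "continuous_on UNIV \<gamma>" and Gc: "convex_on UNIV (\<lambda>t. G (\<gamma> t))"
    and \<psi>c: "convex_on UNIV (\<lambda>t. \<psi> (\<gamma> t))" and oB: "open B"
    and fr: "\<forall>y\<in>frontier B. \<psi> y < G y"
  shows "convex_on UNIV (\<lambda>t. if \<gamma> t \<in> B then max (G (\<gamma> t)) (\<psi> (\<gamma> t)) else G (\<gamma> t))"
proof (rule local_convex_global)
  fix t0
  let ?H = "\<lambda>t. if \<gamma> t \<in> B then max (G (\<gamma> t)) (\<psi> (\<gamma> t)) else G (\<gamma> t)"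
  have Gcc: "continuous_on UNIV (\<lambda>t. G (\<gamma> t))" using convex_on_continuous[OF open_UNIV Gc] .
  have \<psi>cc: "continuous_on UNIV (\<lambda>t. \<psi> (\<gamma> t))" using convex_on_continuous[OF open_UNIV \<psi>c] .
  show "\<exists>e>0. convex_on (ball t0 e) ?H"
  proof (cases "\<psi> (\<gamma> t0) < G (\<gamma> t0)")
    case True
    have "open {t. \<psi> (\<gamma> t) < G (\<gamma> t)}" by (rule open_Collect_less[OF \<psi>cc Gcc])
    then have "\<exists>e>0. ball t0 e \<subseteq> {t. \<psi> (\<gamma> t) < G (\<gamma> t)}"
      using True unfolding open_contains_ball by simp
    then obtain e where e: "e > 0" "ball t0 e \<subseteq> {t. \<psi> (\<gamma> t) < G (\<gamma> t)}" by blast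
    have "convex_on (ball t0 e) (\<lambda>t. G (\<gamma> t))" using convex_on_subset[OF Gc subset_UNIV convex_ball] .
    then have "convex_on (ball t0 e) ?H"
    proof (rule conv_cong)
      fix t assume "t \<in> ball t0 e"
      then have "\<psi> (\<gamma> t) < G (\<gamma> t)" using subsetD[OF e(2)] by simp
      then show "G (\<gamma> t) = ?H t" by (simp add: max_def)
    qed
    then show ?thesis by (intro exI[where x=e] conjI e(1))
  next
    case False
    then have nf: "\<gamma> t0 \<notin> frontier B" using fr by auto
    show ?thesis
    proof (cases "\<gamma> t0 \<in> B")
      case True
      obtain e where e: "e > 0" "\<And>t. t \<in> ball t0 e \<Longrightarrow> \<gamma> t \<in> B"
        using ball_in_open_pre[OF \<gamma>c oB True] by blast
      have c1: "convex_on (ball t0 e) (\<lambda>t. G (\<gamma> t))" using convex_on_subset[OF Gc subset_UNIV convex_ball] .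
      have c2: "convex_on (ball t0 e) (\<lambda>t. \<psi> (\<gamma> t))" using convex_on_subset[OF \<psi>c subset_UNIV convex_ball] .
      have "convex_on (ball t0 e) (\<lambda>t. max (G (\<gamma> t)) (\<psi> (\<gamma> t)))"
        using convex_on_max2[OF c1 c2] .
      then have "convex_on (ball t0 e) ?H"
      proof (rule conv_cong)
        fix t assume "t \<in> ball t0 e"
        then have "\<gamma> t \<in> B" using e(2) by blast
        then show "max (G (\<gamma> t)) (\<psi> (\<gamma> t)) = ?H t" by simp
      qed
      then show ?thesis by (intro exI[where x=e] conjI e(1))
    next
      case False
      then have ncl: "\<gamma> t0 \<in> - closure B" using nf oB by (auto simp: frontier_def interior_open)
      then obtain e where e: "e > 0" "\<And>t. t \<in> ball t0 e \<Longrightarrow> \<gamma> t \<in> - closure B"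
        using ball_in_open_pre[OF \<gamma>c open_Compl[OF closed_closure] ncl] by metis
      have "convex_on (ball t0 e) (\<lambda>t. G (\<gamma> t))" using convex_on_subset[OF Gc subset_UNIV convex_ball] .
      then have "convex_on (ball t0 e) ?H" proof (rule conv_cong)
        fix t assume "t \<in> ball t0 e"
        then have "\<gamma> t \<notin> B" using e(2) closure_subset by blast
        then show "G (\<gamma> t) = ?H t" by simp
      qed
      then show ?thesis by (intro exI[where x=e] conjI e(1))
    qed
  qed
qed

lemma rc_convex_affine:
  assumes "rc_convex f" "A \<ge> 0"
  shows "rc_convex (\<lambda>w. A * f w + C)"
  using assms unfolding rc_convex_def
  by (auto intro!: convex_on_add convex_on_cmul simp: convex_on_const)

lemma rc_hull_empty: "rc_hull {} = {}"
proof -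
  have "x \<notin> rc_hull {}" for x
  proof
    assume "x \<in> rc_hull {}"
    moreover have "rc_convex (\<lambda>_. Sup ({}::real set) + 1)"
      unfolding rc_convex_def by (simp add: convex_on_const)
    ultimately show False unfolding rc_hull_def by force
  qed
  then show ?thesis by blast
qed

lemma core:
  fixes K B :: "pt3 set" and \<phi> :: "pt3 \<Rightarrow> real" and x :: pt3
  assumes finK: "finite K" and openB: "open B" and bddB: "bounded B" and KB: "K \<inter> B = {}"
    and phic: "continuous_on UNIV \<phi>" and phir: "rc_convex \<phi>"
    and front: "\<forall>y \<in> rc_hull K \<inter> frontier B. \<phi> y \<le> 0"
    and xB: "x \<in> B" and xQ: "x \<in> rc_hull K"
  shows "\<phi> x \<le> 0"
proof (rule ccontr)
  assume "\<not> \<phi> x \<le> 0"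
  define \<delta> where "\<delta> = \<phi> x / 2"
  have \<delta>: "\<delta> > 0" using \<open>\<not> \<phi> x \<le> 0\<close> unfolding \<delta>_def by simp
  define \<psi> where "\<psi> = (\<lambda>y. \<phi> y - \<delta>)"
  have \<psi>x: "\<psi> x = \<delta>" unfolding \<psi>_def \<delta>_def by simp
  have \<psi>c: "continuous_on UNIV \<psi>" unfolding \<psi>_def by (intro continuous_intros phic)
  have \<psi>r: "rc_convex \<psi>" unfolding \<psi>_def using rc_convex_affine[OF phir, of 1 "-\<delta>"] by simp
  have Kne: "K \<noteq> {}" using xQ rc_hull_empty by auto
  define S where "S = frontier B \<inter> {y. 0 \<le> \<psi> y}"
  have cS: "compact S"
  proof -
    have "closed {y. 0 \<le> \<psi> y}" by (intro closed_Collect_le continuous_intros \<psi>c)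
    then have "closed S" unfolding S_def by (intro closed_Int frontier_closed)
    moreover have "S \<subseteq> closure B" unfolding S_def frontier_def by auto
    then have "bounded S" using bounded_closure[OF bddB] bounded_subset by blast
    ultimately show ?thesis by (simp add: compact_eq_bounded_closed)
  qed
  have sep: "\<exists>g. rc_convex g \<and> (\<forall>k\<in>K. g k \<le> 0) \<and> \<psi> y < g y" if yS: "y \<in> S" for y
  proof -
    have "\<phi> y \<ge> \<delta>" using yS unfolding S_def \<psi>_def by auto
    then have "y \<notin> rc_hull K" using front yS \<delta> unfolding S_def by force
    then obtain f where f: "rc_convex f" "\<not> f y \<le> Sup (f ` K)" unfolding rc_hull_def by auto
    define s where "s = Sup (f ` K)"
    have fk: "f k \<le> s" if "k \<in> K" for k
      unfolding s_def using finK that by (intro cSup_upper) auto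
    have fy: "f y - s > 0" using f(2) unfolding s_def by simp
    have \<psi>y: "\<psi> y \<ge> 0" using yS unfolding S_def by simp
    define A where "A = (\<psi> y + 1) / (f y - s)"
    have A: "A > 0" unfolding A_def using fy \<psi>y by simp
    define g where "g = (\<lambda>w. A * f w + (- A * s))"
    have "rc_convex g" unfolding g_def by (rule rc_convex_affine[OF f(1)]) (use A in simp)
    moreover have "\<forall>k\<in>K. g k \<le> 0"
    proof
      fix k assume "k \<in> K"
      then have "A * f k \<le> A * s" using fk A by (simp add: mult_left_mono)
      then show "g k \<le> 0" unfolding g_def by simp
    qed
    moreover have "g y = \<psi> y + 1"
    proof -
      have "g y = A * (f y - s)" unfolding g_def by (simp add: algebra_simps)
      also have "\<dots> = \<psi> y + 1" unfolding A_def using fy by simp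
      finally show ?thesis .
    qed
    ultimately show ?thesis by (intro exI[where x=g]) simp
  qed
  then obtain gs where gs: "\<And>y. y \<in> S \<Longrightarrow> rc_convex (gs y) \<and> (\<forall>k\<in>K. gs y k \<le> 0) \<and> \<psi> y < gs y y"
    by metis
  have opW: "open {w. \<psi> w < gs y w}" if "y \<in> S" for y
    using gs[OF that] by (intro open_Collect_less \<psi>c rc_convex_cont) auto
  have cov: "S \<subseteq> (\<Union>y\<in>S. {w. \<psi> w < gs y w})" using gs by auto
  obtain Y where Y: "Y \<subseteq> S" "finite Y" "S \<subseteq> (\<Union>y\<in>Y. {w. \<psi> w < gs y w})"
    using compactE_image[OF cS opW cov] by metis
  define G where "G = (\<lambda>w. Max (insert 0 ((\<lambda>y. gs y w) ` Y)))"
  have G0: "G w \<ge> 0" for w unfolding G_def using Y(2) by simp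
  have Gge: "G w \<ge> gs y w" if "y \<in> Y" for y w unfolding G_def using Y(2) that by simp
  have GK: "G k = 0" if "k \<in> K" for k
  proof -
    have "\<forall>y\<in>Y. gs y k \<le> 0" using gs Y(1) that by blast
    then have "G k \<le> 0" unfolding G_def using Y(2) by simp
    then show ?thesis using G0[of k] by simp
  qed
  have Gfr: "\<forall>y\<in>frontier B. \<psi> y < G y"
  proof
    fix y assume yf: "y \<in> frontier B"
    show "\<psi> y < G y"
    proof (cases "\<psi> y < 0")
      case True then show ?thesis using G0[of y] by simp
    next
      case False
      then have "y \<in> S" unfolding S_def using yf by simp
      then obtain y' where "y' \<in> Y" "\<psi> y < gs y' y" using Y(3) by blast
      then show ?thesis using Gge[of y' y] by simp
    qed
  qed
  define h where "h = (\<lambda>w. if w \<in> B then max (G w) (\<psi> w) else G w)"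
  have hline: "convex_on UNIV (\<lambda>t. h (x0 + t *\<^sub>R v))"
    if lines: "\<And>f. rc_convex f \<Longrightarrow> convex_on UNIV (\<lambda>t. f (x0 + t *\<^sub>R v))" for x0 v
  proof -
    have "convex_on UNIV (\<lambda>t. G (x0 + t *\<^sub>R v))"
      unfolding G_def
      by (rule convex_on_Max0[OF Y(2)]) (use gs Y(1) lines in blast)
    moreover have "convex_on UNIV (\<lambda>t. \<psi> (x0 + t *\<^sub>R v))" using lines[OF \<psi>r] .
    moreover have "continuous_on UNIV (\<lambda>t::real. x0 + t *\<^sub>R v)" by (intro continuous_intros)
    ultimately have "convex_on UNIV (\<lambda>t. if x0 + t *\<^sub>R v \<in> B then max (G (x0 + t *\<^sub>R v)) (\<psi> (x0 + t *\<^sub>R v)) else G (x0 + t *\<^sub>R v))"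
      using glue[of "\<lambda>t. x0 + t *\<^sub>R v" G \<psi> B] openB Gfr by simp
    then show ?thesis unfolding h_def .
  qed
  have hr: "rc_convex h" unfolding rc_convex_def
  proof (intro conjI allI impI)
    fix x0 v :: pt3 assume "snd v = 0"
    show "convex_on UNIV (\<lambda>t. h (x0 + t *\<^sub>R v))"
    proof (rule hline)
      fix f :: "pt3 \<Rightarrow> real" assume "rc_convex f"
      then show "convex_on UNIV (\<lambda>t. f (x0 + t *\<^sub>R v))"
        unfolding rc_convex_def using \<open>snd v = 0\<close> by blast
    qed
  next
    fix x0 :: pt3
    show "convex_on UNIV (\<lambda>t. h (x0 + t *\<^sub>R ((0, 0), 1)))"
    proof (rule hline)
      fix f :: "pt3 \<Rightarrow> real" assume "rc_convex f"
      then show "convex_on UNIV (\<lambda>t. f (x0 + t *\<^sub>R ((0, 0), 1)))"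
        unfolding rc_convex_def by blast
    qed
  qed
  have hK: "h ` K = {0}" using Kne KB GK unfolding h_def by auto
  have "h x \<le> Sup (h ` K)" using xQ hr unfolding rc_hull_def by blast
  then have "h x \<le> 0" using hK by simp
  moreover have "h x \<ge> \<delta>" using xB \<psi>x unfolding h_def by simp
  ultimately show False using \<delta> by simp
qed

lemma noncollinear_cross:
  fixes a b c :: "real \<times> real"
  assumes "\<not> collinear {a, b, c}"
  shows "fst (b - a) * snd (c - a) - snd (b - a) * fst (c - a) \<noteq> 0"
proof
  assume k: "fst (b - a) * snd (c - a) - snd (b - a) * fst (c - a) = 0"
  define x where "x = a - b"
  define y where "y = c - b"
  have cr: "fst x * snd y - snd x * fst y = 0" using k unfolding x_def y_def by (simp add: algebra_simps)
  have "collinear {0, x, y}"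
  proof (cases "x = 0")
    case True then show ?thesis by (simp add: collinear_lemma)
  next
    case False
    define q where "q = fst x * fst x + snd x * snd x"
    have "fst x \<noteq> 0 \<or> snd x \<noteq> 0" using False by (simp add: prod_eq_iff)
    then have q: "q > 0" unfolding q_def by (simp add: sum_squares_gt_zero_iff)
    define t where "t = (fst x * fst x * fst y + fst x * snd x * snd y) / q"
    define t' where "t' = (fst x * snd x * fst y + snd x * snd x * snd y) / q"
    have tt: "(fst x * fst y + snd x * snd y) / q * fst x = t" unfolding t_def by (simp add: algebra_simps add_divide_distrib)
    have tt': "(fst x * fst y + snd x * snd y) / q * snd x = t'" unfolding t'_def by (simp add: algebra_simps add_divide_distrib)
    have d1: "fst x * fst x * fst y + fst x * snd x * snd y - fst y * q = snd x * (fst x * snd y - snd x * fst y)"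
      unfolding q_def by (simp add: algebra_simps)
    have d2: "fst x * snd x * fst y + snd x * snd x * snd y - snd y * q = - fst x * (fst x * snd y - snd x * fst y)"
      unfolding q_def by (simp add: algebra_simps)
    have e1: "fst x * fst x * fst y + fst x * snd x * snd y = fst y * q" using d1 cr by simp
    have e2: "fst x * snd x * fst y + snd x * snd x * snd y = snd y * q" using d2 cr by simp
    have "t = fst y" unfolding t_def e1 using q by simp
    moreover have "t' = snd y" unfolding t'_def e2 using q by simp
    ultimately have "y = ((fst x * fst y + snd x * snd y) / q) *\<^sub>R x" using tt tt' by (simp add: prod_eq_iff)
    then show ?thesis by (auto simp: collinear_lemma)
  qed
  then have "collinear {0, a - b, c - b}" unfolding x_def y_def .
  then have "collinear {a, b, c}"
    by (subst collinear_3) simp_all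
  then show False using assms by simp
qed

lemma edge_fun:
  fixes a b c u0 :: "real \<times> real"
  assumes u0: "u0 \<in> interior (convex hull {a, b, c})"
  shows "\<exists>\<alpha> \<beta> \<gamma>. (\<forall>u\<in>closed_segment a b. \<alpha> * fst u + \<beta> * snd u + \<gamma> = 0) \<and> \<alpha> * fst u0 + \<beta> * snd u0 + \<gamma> > 0"
proof -
  have "aff_dim (convex hull {a, b, c}) = 2" using aff_dim_nonempty_interior[of "convex hull {a,b,c}"] u0 by auto
  then have "\<not> collinear {a, b, c}" by (simp add: collinear_aff_dim aff_dim_convex_hull)
  then have k0: "fst (b - a) * snd (c - a) - snd (b - a) * fst (c - a) \<noteq> 0" by (rule noncollinear_cross)
  define d1 where "d1 = fst b - fst a"
  define d2 where "d2 = snd b - snd a"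
  define \<kappa> where "\<kappa> = d1 * (snd c - snd a) - d2 * (fst c - fst a)"
  have k: "\<kappa> \<noteq> 0" using k0 unfolding \<kappa>_def d1_def d2_def by simp
  define lf where "lf = (\<lambda>u::real\<times>real. \<kappa> * (d1 * (snd u - snd a) - d2 * (fst u - fst a)))"
  have seg: "lf u = 0" if us: "u \<in> closed_segment a b" for u
  proof -
    obtain t where ut: "u = (1 - t) *\<^sub>R a + t *\<^sub>R b" using us unfolding in_segment(1) by auto
    show ?thesis unfolding lf_def d1_def d2_def ut by (simp add: algebra_simps)
  qed
  have nonneg: "lf u \<ge> 0" if uh: "u \<in> convex hull {a, b, c}" for u
  proof -
    obtain p q r where pqr: "0 \<le> p" "0 \<le> q" "0 \<le> r" "p + q + r = 1" "u = p *\<^sub>R a + q *\<^sub>R b + r *\<^sub>R c"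
      using uh unfolding convex_hull_3 by auto
    have "lf u = r * \<kappa> * \<kappa>"
    proof -
      have p: "p = 1 - q - r" using pqr(4) by simp
      show ?thesis unfolding lf_def \<kappa>_def d1_def d2_def pqr(5) p by (simp add: algebra_simps)
    qed
    moreover have "0 \<le> r * (\<kappa> * \<kappa>)" using pqr(3) by simp
    ultimately show ?thesis by (simp add: mult.assoc)
  qed
  obtain e where e: "e > 0" "ball u0 e \<subseteq> convex hull {a, b, c}"
    using u0 by (meson open_contains_ball open_interior interior_subset subset_trans)
  define n where "n = (\<kappa> * d2, - \<kappa> * d1)"
  define s where "s = e / (2 * (norm n + 1))"
  have np: "norm n + 1 > 0" by (rule add_nonneg_pos) simp_all
  then have "2 * (norm n + 1) > 0" by simp
  then have s: "s > 0" unfolding s_def using e by (simp only: divide_pos_pos)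
  have "s * norm n < e"
  proof -
    have "s * norm n \<le> s * (norm n + 1)" using s by simp
    also have "\<dots> = e / 2"
    proof -
      have gen: "e / (2 * X) * X = e / 2" if "X > 0" for X :: real using that by (simp add: field_simps)
      show ?thesis unfolding s_def using gen[OF np] .
    qed
    finally show ?thesis using e by simp
  qed
  then have "u0 + s *\<^sub>R n \<in> ball u0 e" by (simp add: dist_norm s less_imp_le)
  then have "lf (u0 + s *\<^sub>R n) \<ge> 0" using e nonneg by blast
  moreover have "lf (u0 + s *\<^sub>R n) = lf u0 - s * \<kappa> * \<kappa> * (d1 * d1 + d2 * d2)"
    unfolding lf_def n_def by (simp add: algebra_simps)
  moreover have "d1 * d1 + d2 * d2 > 0"
  proof -
    have "d1 \<noteq> 0 \<or> d2 \<noteq> 0" using k unfolding \<kappa>_def by auto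
    then show ?thesis by (simp add: sum_squares_gt_zero_iff)
  qed
  moreover have "\<kappa> * \<kappa> > 0" using k not_real_square_gt_zero by blast
  ultimately have "s * (\<kappa> * \<kappa>) * (d1 * d1 + d2 * d2) > 0" "lf u0 - s * \<kappa> * \<kappa> * (d1 * d1 + d2 * d2) \<ge> 0"
    using s by (simp_all only: mult_pos_pos)
  then have "lf u0 > 0" by (simp add: mult.assoc)
  show ?thesis
  proof (intro exI conjI)
    show "\<forall>u\<in>closed_segment a b. (- \<kappa> * d2) * fst u + (\<kappa> * d1) * snd u + (\<kappa> * (d2 * fst a - d1 * snd a)) = 0"
      using seg unfolding lf_def by (simp add: algebra_simps)
    show "(- \<kappa> * d2) * fst u0 + (\<kappa> * d1) * snd u0 + (\<kappa> * (d2 * fst a - d1 * snd a)) > 0"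
      using \<open>lf u0 > 0\<close> unfolding lf_def by (simp add: algebra_simps)
  qed
qed

lemma affine_line_convex:
  fixes f :: "real \<Rightarrow> real"
  assumes "\<And>t. f t = A + B * t"
  shows "convex_on UNIV f"
proof (rule convex_onI)
  fix t x y :: real
  show "f ((1 - t) *\<^sub>R x + t *\<^sub>R y) \<le> (1 - t) * f x + t * f y"
    unfolding assms by (simp add: algebra_simps)
qed simp

definition phi3 :: "real \<Rightarrow> real \<Rightarrow> real \<Rightarrow> real \<Rightarrow> real \<Rightarrow> pt3 \<Rightarrow> real" where
  "phi3 \<alpha> \<beta> \<gamma> \<sigma> \<tau> y = (\<alpha> * fst (fst y) + \<beta> * snd (fst y) + \<gamma>) * (\<sigma> * snd y + \<tau>)"

lemma phi3_cont: "continuous_on UNIV (phi3 \<alpha> \<beta> \<gamma> \<sigma> \<tau>)"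
  unfolding phi3_def by (intro continuous_intros)

lemma phi3_rc: "rc_convex (phi3 \<alpha> \<beta> \<gamma> \<sigma> \<tau>)"
  unfolding rc_convex_def
proof (intro conjI allI impI)
  fix x v :: pt3 assume v: "snd v = 0"
  show "convex_on UNIV (\<lambda>t. phi3 \<alpha> \<beta> \<gamma> \<sigma> \<tau> (x + t *\<^sub>R v))"
    by (rule affine_line_convex[where A = "(\<alpha> * fst (fst x) + \<beta> * snd (fst x) + \<gamma>) * (\<sigma> * snd x + \<tau>)"
          and B = "(\<alpha> * fst (fst v) + \<beta> * snd (fst v)) * (\<sigma> * snd x + \<tau>)"])
       (simp add: phi3_def v algebra_simps)
next
  fix x :: pt3
  show "convex_on UNIV (\<lambda>t. phi3 \<alpha> \<beta> \<gamma> \<sigma> \<tau> (x + t *\<^sub>R ((0, 0), 1)))"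
    by (rule affine_line_convex[where A = "(\<alpha> * fst (fst x) + \<beta> * snd (fst x) + \<gamma>) * (\<sigma> * snd x + \<tau>)"
          and B = "(\<alpha> * fst (fst x) + \<beta> * snd (fst x) + \<gamma>) * \<sigma>"])
       (simp add: phi3_def algebra_simps)
qed

theorem theorem4p3:
  fixes K M B :: "pt3 set" and p :: pt3
  assumes "finite K"
    and "rc_hull K \<subseteq> M"
    and "p \<in> M" and "p \<notin> K"
    and "extremal_point M p"
    and "D_prism M K p B"
  shows "rc_hull K \<subseteq> M - B"
proof -
  obtain a b c :: "real \<times> real" and h0 h1 :: real where
    Bdef: "B = interior ((convex hull {a, b, c}) \<times> {h0..h1})" and KB: "K \<inter> B = {}" and
    FG: "\<exists>F \<in> {closed_segment a b \<times> {h0..h1}, closed_segment b c \<times> {h0..h1}, closed_segment c a \<times> {h0..h1}}.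
         \<exists>G \<in> {(convex hull {a, b, c}) \<times> {h0}, (convex hull {a, b, c}) \<times> {h1}}.
            M \<inter> frontier B \<subseteq> F \<union> G"
    using assms(6) unfolding D_prism_def Let_def by blast
  let ?T = "convex hull {a, b, c}"
  have oB: "open B" unfolding Bdef by simp
  have bB: "bounded B"
  proof -
    have "bounded (?T \<times> {h0..h1})"
      by (intro bounded_Times compact_imp_bounded compact_convex_hull) auto
    then show ?thesis unfolding Bdef using interior_subset bounded_subset by blast
  qed
  have "x \<notin> B" if xQ: "x \<in> rc_hull K" for x
  proof
    assume xB: "x \<in> B"
    then have xT: "fst x \<in> interior ?T" and xH: "h0 < snd x" "snd x < h1"
      unfolding Bdef interior_Times by auto
    obtain F G where F: "F \<in> {closed_segment a b \<times> {h0..h1}, closed_segment b c \<times> {h0..h1}, closed_segment c a \<times> {h0..h1}}"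
      and G: "G \<in> {?T \<times> {h0}, ?T \<times> {h1}}" and MFG: "M \<inter> frontier B \<subseteq> F \<union> G"
      using FG by blast
    have "\<exists>\<alpha> \<beta> \<gamma>. (\<forall>y\<in>F. \<alpha> * fst (fst y) + \<beta> * snd (fst y) + \<gamma> = 0) \<and> \<alpha> * fst (fst x) + \<beta> * snd (fst x) + \<gamma> > 0"
    proof -
      have T1: "convex hull {b, c, a} = ?T" "convex hull {c, a, b} = ?T" by (simp_all add: insert_commute)
      consider "F = closed_segment a b \<times> {h0..h1}" | "F = closed_segment b c \<times> {h0..h1}" | "F = closed_segment c a \<times> {h0..h1}"
        using F by blast
      then show ?thesis
      proof cases
        case 1 then show ?thesis using edge_fun[of "fst x" a b c] xT by fastforce
      next
        case 2 then show ?thesis using edge_fun[of "fst x" b c a] xT T1 by fastforce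
      next
        case 3 then show ?thesis using edge_fun[of "fst x" c a b] xT T1 by fastforce
      qed
    qed
    then obtain \<alpha> \<beta> \<gamma> where l0: "\<forall>y\<in>F. \<alpha> * fst (fst y) + \<beta> * snd (fst y) + \<gamma> = 0"
      and lx: "\<alpha> * fst (fst x) + \<beta> * snd (fst x) + \<gamma> > 0" by blast
    have "\<exists>\<sigma> \<tau>. (\<forall>y\<in>G. \<sigma> * snd y + \<tau> = 0) \<and> \<sigma> * snd x + \<tau> > 0"
    proof -
      consider "G = ?T \<times> {h0}" | "G = ?T \<times> {h1}" using G by blast
      then show ?thesis
      proof cases
        case 1 then show ?thesis using xH by (intro exI[where x=1] exI[where x="-h0"]) auto
      next
        case 2 then show ?thesis using xH by (intro exI[where x="-1"] exI[where x="h1"]) auto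
      qed
    qed
    then obtain \<sigma> \<tau> where w0: "\<forall>y\<in>G. \<sigma> * snd y + \<tau> = 0" and wx: "\<sigma> * snd x + \<tau> > 0" by blast
    have front: "\<forall>y \<in> rc_hull K \<inter> frontier B. phi3 \<alpha> \<beta> \<gamma> \<sigma> \<tau> y \<le> 0"
    proof
      fix y assume "y \<in> rc_hull K \<inter> frontier B"
      then have "y \<in> F \<union> G" using assms(2) MFG by blast
      then show "phi3 \<alpha> \<beta> \<gamma> \<sigma> \<tau> y \<le> 0" unfolding phi3_def using l0 w0 by auto
    qed
    have "phi3 \<alpha> \<beta> \<gamma> \<sigma> \<tau> x \<le> 0"
      by (rule core[OF assms(1) oB bB KB phi3_cont phi3_rc front xB xQ])
    moreover have "phi3 \<alpha> \<beta> \<gamma> \<sigma> \<tau> x > 0" unfolding phi3_def using lx wx by simp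
    ultimately show False by simp
  qed
  then show ?thesis using assms(2) by blast
qed

end
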